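(* Fix integers $CW_{min}\ge 1$, $CW_{max}\ge CW_{min}$ and a retry limit $RL\ge 1$, and set $CW_0=CW_{min}$, $CW_i=\min\{CW_{max},2CW_{i-1}\}$ for $i>0$. Consider a single station operating in discrete virtual slots $t=0,1,2,\dots$ in the idealized regime of infinitely many contending stations, in which every transmission of the station collides. The station's retry counter starts at $0$; it makes its first transmission in a slot chosen uniformly at random from $\{0,1,\dots,CW_0-1\}$. Each transmission collides and increases the retry counter by one; if a transmission in slot $i$ raises the counter to a value $r<RL$, the next transmission takes place in slot $i+K$, where $K$ is uniform on $\{1,\dots,CW_r\}$ and independent of the past; once the counter reaches $RL$ the station makes no further transmissions. Define $a(t,r)$ for integers $t$ and $r\ge 0$ by $a(t,r)=0$ for $t<0$ and, for $t\ge 0$, $$a(t,r)=\begin{cases}\frac{1}{CW_0}, & r=0,\ 0\le t<CW_0,\\ 0, & r=0,\ t\ge CW_0,\\ 0, & r\ge RL,\\ \frac{1}{CW_r}\sum_{i=t-CW_r}^{t-1}a(i,r-1), & 0<r<RL,\end{cases}$$ and $$b(t,r)=\begin{cases}1-\sum_{i=0}^{t-1}a(i,r), & r=0,\\ \sum_{i=0}^{t-1}\bigl(a(i,r-1)-a(i,r)\bigr), & r>0.\end{cases}$$ Let $\Pr(TX\mid t,r)$ denote the probability that the station transmits in slot $t$, conditioned on the event that at the beginning of slot $t$ its retry counter equals $r$ (i.e. it has made exactly $r$ transmissions before slot $t$). Then, whenever $b(t,r)>0$, $$\Pr(TX\mid t,r)=\frac{a(t,r)}{b(t,r)}.$$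
   Context: This models the truncated binary exponential backoff of IEEE 802.11 (EDCA) for one station. Time is measured in virtual slots (the intervals between consecutive backoff-counter changes), so the backoff value drawn after a transmission determines directly the number of slots until the next attempt. The limit of infinitely many stations is interpreted as: the probability that a transmission of the station collides equals the probability that it transmits, i.e. every transmission collides. In this model $a(t,r)$ is the probability that the station transmits in slot $t$ with retry counter $r$, and $b(t,r)$ is the probability that its retry counter equals $r$ at the beginning of slot $t$. *)

theory Defs
  imports "HOL-Probability.Probability"
begin

primrec CW :: "nat \<Rightarrow> nat \<Rightarrow> nat \<Rightarrow> nat" where
  "CW CWmin CWmax 0 = CWmin"
| "CW CWmin CWmax (Suc i) = min CWmax (2 * CW CWmin CWmax i)"

primrec a_fun :: "nat \<Rightarrow> nat \<Rightarrow> nat \<Rightarrow> nat \<Rightarrow> int \<Rightarrow> real" where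
  "a_fun CWmin CWmax RL 0 t =
     (if t < 0 then 0
      else if RL \<le> 0 then 0
      else if t < int (CW CWmin CWmax 0) then 1 / real (CW CWmin CWmax 0) else 0)"
| "a_fun CWmin CWmax RL (Suc r) t =
     (if t < 0 then 0
      else if RL \<le> Suc r then 0
      else (1 / real (CW CWmin CWmax (Suc r))) *
           (\<Sum>i\<in>{t - int (CW CWmin CWmax (Suc r)) .. t - 1}. a_fun CWmin CWmax RL r i))"

fun b_fun :: "nat \<Rightarrow> nat \<Rightarrow> nat \<Rightarrow> nat \<Rightarrow> nat \<Rightarrow> real" where
  "b_fun CWmin CWmax RL 0 t = 1 - (\<Sum>i<t. a_fun CWmin CWmax RL 0 (int i))"
| "b_fun CWmin CWmax RL (Suc r) t =
     (\<Sum>i<t. a_fun CWmin CWmax RL r (int i) - a_fun CWmin CWmax RL (Suc r) (int i))"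

text \<open>Joint distribution of the first n transmission slots of the station (n \<le> RL):
  the first transmission is uniform on {0..CW_0-1}; the transmission following the one
  that raised the retry counter to r (0 < r < RL) happens K slots later, K uniform on
  {1..CW_r}, independent of the past.\<close>
primrec tx_times :: "nat \<Rightarrow> nat \<Rightarrow> nat \<Rightarrow> nat list pmf" where
  "tx_times CWmin CWmax 0 = return_pmf []"
| "tx_times CWmin CWmax (Suc n) =
     do { ts \<leftarrow> tx_times CWmin CWmax n;
          (if n = 0
           then map_pmf (\<lambda>k. [k]) (pmf_of_set {0..<CW CWmin CWmax 0})
           else map_pmf (\<lambda>k. ts @ [last ts + k]) (pmf_of_set {1..CW CWmin CWmax n})) }"

text \<open>All transmissions of the station (it stops after RL of them).\<close>
definition station :: "nat \<Rightarrow> nat \<Rightarrow> nat \<Rightarrow> nat list pmf" where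
  "station CWmin CWmax RL = tx_times CWmin CWmax RL"

definition retry_counter :: "nat list \<Rightarrow> nat \<Rightarrow> nat" where
  "retry_counter ts t = length (filter (\<lambda>s. s < t) ts)"

definition transmits :: "nat list \<Rightarrow> nat \<Rightarrow> bool" where
  "transmits ts t \<longleftrightarrow> t \<in> set ts"

end

theory Submission
  imports Defs
begin

lemma CW_pos: "CWmin \<ge> 1 \<Longrightarrow> CWmax \<ge> CWmin \<Longrightarrow> CW CWmin CWmax n \<ge> 1"
  by (induction n) auto

lemma a_zero: "RL \<le> r \<Longrightarrow> RL \<ge> 1 \<Longrightarrow> a_fun CWmin CWmax RL r i = 0"
  by (cases r) auto

lemma a_neg: "i < 0 \<Longrightarrow> a_fun CWmin CWmax RL r i = 0"
  by (cases r) auto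

lemma sorted_last: "sorted_wrt (<) (ts::nat list) \<Longrightarrow> x \<in> set ts \<Longrightarrow> x \<le> last ts"
proof (induction ts)
  case Nil then show ?case by simp
next
  case (Cons y ys) then show ?case
    by (cases ys) (auto simp: less_imp_le)
qed

lemma support:
  assumes "CWmin \<ge> 1" "CWmax \<ge> CWmin"
  shows "ts \<in> set_pmf (tx_times CWmin CWmax n) \<Longrightarrow> length ts = n \<and> sorted_wrt (<) ts"
proof (induction n arbitrary: ts)
  case 0 then show ?case by simp
next
  case (Suc n)
  have ne0: "{0..<CW CWmin CWmax 0} \<noteq> {}" using CW_pos[OF assms, of 0] by auto
  have ne: "{1..CW CWmin CWmax n} \<noteq> {}" using CW_pos[OF assms, of n] by auto
  from Suc.prems obtain ts0 where ts0: "ts0 \<in> set_pmf (tx_times CWmin CWmax n)"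
    and ts: "ts \<in> set_pmf (if n = 0
           then map_pmf (\<lambda>k. [k]) (pmf_of_set {0..<CW CWmin CWmax 0})
           else map_pmf (\<lambda>k. ts0 @ [last ts0 + k]) (pmf_of_set {1..CW CWmin CWmax n}))"
    by auto
  note IH = Suc.IH[OF ts0]
  show ?case
  proof (cases "n = 0")
    case True then show ?thesis using ts ne0 by auto
  next
    case False
    then obtain k where k: "k \<ge> 1" "ts = ts0 @ [last ts0 + k]" using ts ne by auto
    have "\<forall>x\<in>set ts0. x < last ts0 + k" using sorted_last[of ts0] IH k(1) by fastforce
    then show ?thesis using IH k by (auto simp: sorted_wrt_append)
  qed
qed


lemma prefix:
  assumes "CWmin \<ge> 1" "CWmax \<ge> CWmin"
  shows "r < n \<Longrightarrow> map_pmf (\<lambda>ts. ts!r) (tx_times CWmin CWmax n)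
          = map_pmf (\<lambda>ts. ts!r) (tx_times CWmin CWmax (Suc r))"
proof (induction n)
  case 0 then show ?case by simp
next
  case (Suc n)
  show ?case
  proof (cases "r = n")
    case True then show ?thesis by simp
  next
    case False
    then have rn: "r < n" using Suc.prems by simp
    then have n0: "n \<noteq> 0" by simp
    have "map_pmf (\<lambda>ts. ts!r) (tx_times CWmin CWmax (Suc n))
       = bind_pmf (tx_times CWmin CWmax n) (\<lambda>ts. map_pmf (\<lambda>k. (ts @ [last ts + k])!r) (pmf_of_set {1..CW CWmin CWmax n}))"
      using n0 by (simp add: map_bind_pmf pmf.map_comp o_def)
    also have "\<dots> = bind_pmf (tx_times CWmin CWmax n) (\<lambda>ts. return_pmf (ts!r))"
    proof (rule bind_pmf_cong[OF refl])
      fix ts assume "ts \<in> set_pmf (tx_times CWmin CWmax n)"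
      then have "length ts = n" using support[OF assms] by blast
      then show "map_pmf (\<lambda>k. (ts @ [last ts + k])!r) (pmf_of_set {1..CW CWmin CWmax n}) = return_pmf (ts!r)"
        using rn by (simp add: nth_append map_pmf_const)
    qed
    also have "\<dots> = map_pmf (\<lambda>ts. ts!r) (tx_times CWmin CWmax n)"
      by (simp add: map_pmf_def)
    finally show ?thesis using Suc.IH rn by simp
  qed
qed


lemma int_sum_conv:
  "(\<Sum>i\<in>{int t - int c .. int t - 1}. a_fun CWmin CWmax RL m i)
   = (\<Sum>x\<in>{t - c..<t}. a_fun CWmin CWmax RL m (int x))"
proof -
  have sub: "int ` {t - c..<t} \<subseteq> {int t - int c .. int t - 1}" by auto
  have "(\<Sum>x\<in>{t - c..<t}. a_fun CWmin CWmax RL m (int x))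
      = (\<Sum>i\<in>int ` {t - c..<t}. a_fun CWmin CWmax RL m i)"
    by (simp add: sum.reindex)
  also have "\<dots> = (\<Sum>i\<in>{int t - int c .. int t - 1}. a_fun CWmin CWmax RL m i)"
  proof (rule sum.mono_neutral_left[OF _ sub])
    show "finite {int t - int c..int t - 1}" by simp
    show "\<forall>i\<in>{int t - int c..int t - 1} - int ` {t - c..<t}. a_fun CWmin CWmax RL m i = 0"
    proof
      fix i assume i: "i \<in> {int t - int c..int t - 1} - int ` {t - c..<t}"
      have "i < 0"
      proof (rule ccontr)
        assume "\<not> i < 0"
        then have "i = int (nat i)" by simp
        moreover have "nat i \<in> {t - c..<t}" using i \<open>\<not> i < 0\<close> by auto
        ultimately show False using i by (metis DiffE imageI)
      qed
      then show "a_fun CWmin CWmax RL m i = 0" by (rule a_neg)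
    qed
  qed
  finally show ?thesis by simp
qed

lemma dist:
  assumes "CWmin \<ge> 1" "CWmax \<ge> CWmin"
  shows "r < RL \<Longrightarrow> pmf (map_pmf (\<lambda>ts. ts!r) (tx_times CWmin CWmax (Suc r))) t
           = a_fun CWmin CWmax RL r (int t)"
proof (induction r arbitrary: t)
  case 0
  have "map_pmf (\<lambda>ts. ts!0) (tx_times CWmin CWmax (Suc 0)) = pmf_of_set {0..<CW CWmin CWmax 0}"
    by (simp add: pmf.map_comp o_def)
  moreover have "{0..<CW CWmin CWmax 0} \<noteq> {}" using CW_pos[OF assms, of 0] by auto
  ultimately show ?case using 0 by (simp add: indicator_def)
next
  case (Suc m)
  define c where "c = CW CWmin CWmax (Suc m)"
  have c1: "c \<ge> 1" unfolding c_def using CW_pos[OF assms] by blast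
  define U where "U = pmf_of_set {1..c}"
  define Dm where "Dm = map_pmf (\<lambda>ts. ts!m) (tx_times CWmin CWmax (Suc m))"
  have "map_pmf (\<lambda>ts. ts!Suc m) (tx_times CWmin CWmax (Suc (Suc m)))
     = bind_pmf (tx_times CWmin CWmax (Suc m)) (\<lambda>ts. map_pmf (\<lambda>k. (ts @ [last ts + k])!Suc m) U)"
    by (simp add: map_bind_pmf pmf.map_comp o_def U_def c_def)
  also have "\<dots> = bind_pmf (tx_times CWmin CWmax (Suc m)) (\<lambda>ts. map_pmf (\<lambda>k. ts!m + k) U)"
  proof (rule bind_pmf_cong[OF refl])
    fix ts assume "ts \<in> set_pmf (tx_times CWmin CWmax (Suc m))"
    then have l: "length ts = Suc m" using support[OF assms] by blast
    then have "last ts = ts!m" by (metis last_conv_nth diff_Suc_1 list.size(3) nat.distinct(1))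
    then show "map_pmf (\<lambda>k. (ts @ [last ts + k])!Suc m) U = map_pmf (\<lambda>k. ts!m + k) U"
      using l by (simp add: nth_append)
  qed
  also have "\<dots> = bind_pmf Dm (\<lambda>x. map_pmf (\<lambda>k. x + k) U)"
    by (simp add: Dm_def bind_map_pmf)
  finally have eq: "map_pmf (\<lambda>ts. ts!Suc m) (tx_times CWmin CWmax (Suc (Suc m)))
      = bind_pmf Dm (\<lambda>x. map_pmf (\<lambda>k. x + k) U)" .
  have pm: "pmf (map_pmf (\<lambda>k. x + k) U) t = (if t - c \<le> x \<and> x < t then 1 / real c else 0)" for x
  proof -
    have "map_pmf (\<lambda>k. x + k) U = pmf_of_set ((\<lambda>k. x + k) ` {1..c})"
      unfolding U_def using c1 by (intro map_pmf_of_set_inj) auto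
    moreover have "(\<lambda>k. x + k) ` {1..c} = {x+1..x+c}"
      by (metis add.commute image_add_atLeastAtMost)
    moreover have "(t \<in> {x+1..x+c}) = (t - c \<le> x \<and> x < t)" by auto
    moreover have "pmf (pmf_of_set {x+1..x+c}) t = indicator {x+1..x+c} t / card {x+1..x+c}"
      using c1 by (intro pmf_of_set) auto
    moreover have "card {x+1..x+c} = c" by simp
    ultimately show ?thesis by (simp only:) (simp add: indicator_def)
  qed
  have "pmf (bind_pmf Dm (\<lambda>x. map_pmf (\<lambda>k. x + k) U)) t
      = (\<integral>x. pmf (map_pmf (\<lambda>k. x + k) U) t \<partial>measure_pmf Dm)" by (rule pmf_bind)
  also have "\<dots> = (\<Sum>x\<in>{t - c..<t}. pmf (map_pmf (\<lambda>k. x + k) U) t * pmf Dm x)"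
    by (rule integral_measure_pmf_real) (auto simp: pm split: if_splits)
  also have "\<dots> = (\<Sum>x\<in>{t - c..<t}. 1 / real c * a_fun CWmin CWmax RL m (int x))"
    using Suc.IH[of] Suc.prems by (intro sum.cong refl) (auto simp: pm Dm_def)
  also have "\<dots> = 1 / real c * (\<Sum>i\<in>{int t - int c .. int t - 1}. a_fun CWmin CWmax RL m i)"
    by (simp add: int_sum_conv sum_distrib_left)
  also have "\<dots> = a_fun CWmin CWmax RL (Suc m) (int t)"
    using Suc.prems by (simp add: c_def)
  finally show ?case using eq by simp
qed


lemma L1: "sorted_wrt (<) (ts::nat list) \<Longrightarrow> 1 \<le> j \<Longrightarrow> j \<le> length ts \<Longrightarrow>
  (j \<le> length (filter (\<lambda>s. s<t) ts) \<longleftrightarrow> ts!(j-1) < t)"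
proof (induction ts arbitrary: j)
  case Nil then show ?case by simp
next
  case (Cons x xs)
  show ?case
  proof (cases "x < t")
    case True
    show ?thesis
    proof (cases j)
      case 0 then show ?thesis using Cons by simp
    next
      case (Suc j')
      show ?thesis
      proof (cases j')
        case 0 then show ?thesis using Suc True by simp
      next
        case (Suc j'')
        then show ?thesis using Cons.IH[of j'] Cons.prems \<open>j = Suc j'\<close> True by auto
      qed
    qed
  next
    case False
    then have f: "filter (\<lambda>s. s<t) (x#xs) = []" using Cons.prems(1) by (auto simp: filter_empty_conv)
    have "\<not> (x#xs)!(j-1) < t"
    proof (cases "j - 1")
      case 0 then show ?thesis using False by simp
    next
      case (Suc k)
      then have "k < length xs" using Cons.prems by simp
      then have "x < xs!k" using Cons.prems(1) by simp
      then show ?thesis using False Suc by simp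
    qed
    then show ?thesis using f Cons.prems by simp
  qed
qed

lemma L2: "sorted_wrt (<) (ts::nat list) \<Longrightarrow>
  (t \<in> set ts \<and> length (filter (\<lambda>s. s<t) ts) = r) \<longleftrightarrow> (r < length ts \<and> ts!r = t)"
proof (induction ts arbitrary: r)
  case Nil then show ?case by simp
next
  case (Cons x xs)
  show ?case
  proof (cases "x < t")
    case True
    then show ?thesis using Cons by (cases r) auto
  next
    case False
    then have f: "filter (\<lambda>s. s<t) (x#xs) = []" using Cons.prems(1) by (auto simp: filter_empty_conv)
    show ?thesis
    proof (cases r)
      case 0 then show ?thesis using f False Cons.prems by auto
    next
      case (Suc r')
      have "r' < length xs \<Longrightarrow> x < xs!r'" using Cons.prems(1) by simp
      then show ?thesis using f False Suc by auto
    qed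
  qed
qed

theorem lemma1:
  fixes CWmin CWmax RL t r :: nat
  assumes "CWmin \<ge> 1" and "CWmax \<ge> CWmin" and "RL \<ge> 1"
    and "b_fun CWmin CWmax RL r t > 0"
  shows "cond_prob (measure_pmf (station CWmin CWmax RL))
           (\<lambda>ts. transmits ts t) (\<lambda>ts. retry_counter ts t = r)
         = a_fun CWmin CWmax RL r (int t) / b_fun CWmin CWmax RL r t"
proof -
  define T where "T = tx_times CWmin CWmax RL"
  have sup: "ts \<in> set_pmf T \<Longrightarrow> length ts = RL \<and> sorted_wrt (<) ts" for ts
    using support[OF assms(1,2)] unfolding T_def by blast
  have nth_dist: "j < RL \<Longrightarrow> pmf (map_pmf (\<lambda>ts. ts!j) T) i = a_fun CWmin CWmax RL j (int i)" for j i
    unfolding T_def using prefix[OF assms(1,2), of j RL] dist[OF assms(1,2), of j RL i] by simp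
  have num: "measure T {ts. transmits ts t \<and> retry_counter ts t = r} = a_fun CWmin CWmax RL r (int t)"
  proof -
    have "measure T {ts. transmits ts t \<and> retry_counter ts t = r}
        = measure T ({ts. transmits ts t \<and> retry_counter ts t = r} \<inter> set_pmf T)"
      by (simp add: measure_Int_set_pmf)
    also have "{ts. transmits ts t \<and> retry_counter ts t = r} \<inter> set_pmf T
        = {ts. r < RL \<and> ts!r = t} \<inter> set_pmf T"
      using sup L2 unfolding transmits_def retry_counter_def by blast
    also have "measure T \<dots> = measure T {ts. r < RL \<and> ts!r = t}"
      by (simp add: measure_Int_set_pmf)
    also have "\<dots> = a_fun CWmin CWmax RL r (int t)"
    proof (cases "r < RL")
      case True
      have "measure T {ts. r < RL \<and> ts!r = t} = measure (map_pmf (\<lambda>ts. ts!r) T) {t}"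
        using True by (simp add: vimage_def)
      also have "\<dots> = a_fun CWmin CWmax RL r (int t)"
        using True by (simp add: measure_pmf_single nth_dist)
      finally show ?thesis .
    next
      case False
      then show ?thesis using a_zero[of RL r] assms(3) by simp
    qed
    finally show ?thesis .
  qed
  define G where "G j = measure T {ts. j \<le> retry_counter ts t}" for j
  have G0: "G 0 = 1" unfolding G_def by simp
  have GS: "G (Suc j) = (\<Sum>i<t. a_fun CWmin CWmax RL j (int i))" for j
  proof (cases "j < RL")
    case True
    have "G (Suc j) = measure T ({ts. Suc j \<le> retry_counter ts t} \<inter> set_pmf T)"
      unfolding G_def by (simp add: measure_Int_set_pmf)
    also have "{ts. Suc j \<le> retry_counter ts t} \<inter> set_pmf T = {ts. ts!j < t} \<inter> set_pmf T"
      using sup L1[of _ "Suc j" t] True unfolding retry_counter_def by auto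
    also have "measure T \<dots> = measure (map_pmf (\<lambda>ts. ts!j) T) {..<t}"
      by (simp add: measure_Int_set_pmf vimage_def)
    also have "\<dots> = (\<Sum>i<t. a_fun CWmin CWmax RL j (int i))"
      using True by (subst measure_measure_pmf_finite) (simp_all add: nth_dist)
    finally show ?thesis .
  next
    case False
    have "G (Suc j) = measure T ({ts. Suc j \<le> retry_counter ts t} \<inter> set_pmf T)"
      unfolding G_def by (simp add: measure_Int_set_pmf)
    also have "{ts. Suc j \<le> retry_counter ts t} \<inter> set_pmf T = {}"
    proof -
      have "retry_counter ts t \<le> RL" if "ts \<in> set_pmf T" for ts
        using sup[OF that] length_filter_le[of _ ts] unfolding retry_counter_def by metis
      then show ?thesis using False by fastforce
    qed
    finally show ?thesis using False a_zero[of RL j] assms(3) by simp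
  qed
  have den: "measure T {ts. retry_counter ts t = r} = b_fun CWmin CWmax RL r t"
  proof -
    have "{ts. retry_counter ts t = r} = {ts. r \<le> retry_counter ts t} - {ts. Suc r \<le> retry_counter ts t}"
      by auto
    then have "measure T {ts. retry_counter ts t = r} = G r - G (Suc r)"
      unfolding G_def by (simp add: measure_pmf.finite_measure_Diff subset_eq)
    also have "\<dots> = b_fun CWmin CWmax RL r t"
      by (cases r) (simp_all add: G0 GS sum_subtractf)
    finally show ?thesis .
  qed
  show ?thesis
    unfolding cond_prob_def station_def T_def[symmetric] using num den by simp
qed

end
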